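(* For all integers $n\ge0$ and $k\ge0$, $$\mu(N|_{2n},k,J^{*})\equiv\begin{cases}0\pmod 2,&\text{if }k\text{ is odd},\\ \mu(P|_n,k/2,J^{*})\pmod 2,&\text{if }k\text{ is even}.\end{cases}$$
   Context: Let $N=\{0,1,2,\ldots\}$, $J^{*}=\{(2n+1)2^{2k}-1 : n,k\in N,\ k>0\}=\{3,11,15,19,\ldots\}$, and $P=\{k\in N: k\equiv0,3\pmod 4\}$. For an infinite set $A\subseteq N$, $A|_m$ denotes the set of the $m$ smallest elements of $A$. An involution on a finite set $A$ is a permutation $\sigma$ of $A$ with $\sigma=\sigma^{-1}$; its cycles are fixed points and transpositions $(c,d)$. A transposition $(c,d)$ is said to be in a set $B$ if $c+d\in B$. For a finite set $A\subseteq N$, an integer $k\ge0$ and a set $B\subseteq N$, $\mu(A,k,B)$ denotes the number of involutions of $A$ having exactly $k$ transpositions, all of which are in $B$. *)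

theory Defs
  imports Main "HOL-Combinatorics.Permutations"
begin

definition Jstar :: "nat set" where
  "Jstar = {(2*n+1) * 2^(2*k) - 1 | n k. k > 0}"

definition Pset :: "nat set" where
  "Pset = {k. k mod 4 = 0 \<or> k mod 4 = 3}"

text \<open>A|_m: the set of the m smallest elements of A (A infinite).\<close>
definition restr_smallest :: "nat set \<Rightarrow> nat \<Rightarrow> nat set" where
  "restr_smallest A m = {x \<in> A. card {y \<in> A. y < x} < m}"

definition transps :: "(nat \<Rightarrow> nat) \<Rightarrow> nat set \<Rightarrow> nat set set" where
  "transps \<sigma> A = {{c, \<sigma> c} | c. c \<in> A \<and> \<sigma> c \<noteq> c}"

definition mu :: "nat set \<Rightarrow> nat \<Rightarrow> nat set \<Rightarrow> nat" where
  "mu A k B = card {\<sigma>. \<sigma> permutes A \<and> \<sigma> \<circ> \<sigma> = id \<and> card (transps \<sigma> A) = k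
                      \<and> (\<forall>c\<in>A. \<sigma> c \<noteq> c \<longrightarrow> c + \<sigma> c \<in> B)}"

end

theory Submission
  imports Defs
begin


definition invs :: "nat set \<Rightarrow> nat set \<Rightarrow> (nat\<Rightarrow>nat) set" where
 "invs A B = {\<sigma>. \<sigma> \<circ> \<sigma> = id \<and> (\<forall>x. x\<notin>A \<longrightarrow> \<sigma> x = x) \<and> (\<forall>c\<in>A. \<sigma> c \<noteq> c \<longrightarrow> c + \<sigma> c \<in> B)}"

definition nf :: "(nat\<Rightarrow>nat) \<Rightarrow> nat set \<Rightarrow> nat set" where
 "nf \<sigma> A = {c\<in>A. \<sigma> c \<noteq> c}"

lemma pairing:
  assumes "finite M" "\<And>x. x\<in>M \<Longrightarrow> g x \<in> M \<and> g x \<noteq> x \<and> g (g x) = x"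
  shows "card M = 2 * card ((\<lambda>x. {x, g x}) ` M)"
proof -
  have U: "\<Union>((\<lambda>x. {x, g x}) ` M) = M" using assms(2) by auto
  have "2 * card ((\<lambda>x. {x, g x}) ` M) = card (\<Union>((\<lambda>x. {x, g x}) ` M))"
    apply (rule card_partition)
    using assms U by (auto simp: card_insert_if) (metis assms(2))+
  then show ?thesis using U by simp
qed

lemma parity:
  assumes "finite S" "\<And>x. x\<in>S \<Longrightarrow> \<Phi> x \<in> S \<and> \<Phi> (\<Phi> x) = x"
  shows "card S mod 2 = card {x\<in>S. \<Phi> x = x} mod 2"
proof -
  let ?M = "{x\<in>S. \<Phi> x \<noteq> x}"
  have "card ?M = 2 * card ((\<lambda>x. {x, \<Phi> x}) ` ?M)"
    by (rule pairing) (use assms in auto)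
  moreover have "card S = card {x\<in>S. \<Phi> x = x} + card ?M"
  proof -
    have "S = {x\<in>S. \<Phi> x = x} \<union> ?M" by auto
    then have "card S = card ({x\<in>S. \<Phi> x = x} \<union> ?M)" by simp
    also have "\<dots> = card {x\<in>S. \<Phi> x = x} + card ?M"
      by (rule card_Un_disjoint) (use assms(1) in auto)
    finally show ?thesis .
  qed
  ultimately show ?thesis by simp
qed

lemma inv_maps:
  assumes "\<sigma> \<circ> \<sigma> = id" "\<forall>x. x\<notin>A \<longrightarrow> \<sigma> x = x" "c \<in> A"
  shows "\<sigma> c \<in> A"
proof (rule ccontr)
  assume "\<sigma> c \<notin> A"
  then have "\<sigma> (\<sigma> c) = \<sigma> c" using assms(2) by blast
  moreover have "\<sigma> (\<sigma> c) = c" using assms(1) by (metis comp_apply id_apply)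
  ultimately show False using \<open>\<sigma> c \<notin> A\<close> assms(3) by simp
qed

lemma card_transps:
  assumes "finite A" "\<sigma> \<circ> \<sigma> = id" "\<forall>x. x\<notin>A \<longrightarrow> \<sigma> x = x"
  shows "card (nf \<sigma> A) = 2 * card (transps \<sigma> A)"
proof -
  have inv: "\<sigma> (\<sigma> x) = x" for x using assms(2) by (metis comp_apply id_apply)
  have "transps \<sigma> A = (\<lambda>x. {x, \<sigma> x}) ` nf \<sigma> A"
    unfolding transps_def nf_def by auto
  moreover have "card (nf \<sigma> A) = 2 * card ((\<lambda>x. {x, \<sigma> x}) ` nf \<sigma> A)"
    by (rule pairing) (use assms inv inv_maps[OF assms(2,3)] in \<open>auto simp: nf_def\<close>)
  ultimately show ?thesis by simp
qed

lemma invol_permutes: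
  assumes "\<sigma> \<circ> \<sigma> = id" "\<forall>x. x\<notin>A \<longrightarrow> \<sigma> x = x"
  shows "\<sigma> permutes A"
  unfolding permutes_def
proof (intro conjI allI)
  have inv: "\<sigma> (\<sigma> x) = x" for x using assms(1) by (metis comp_apply id_apply)
  show "\<exists>!x. \<sigma> x = y" for y by (metis inv)
qed (use assms in auto)

lemma mu_alt:
  assumes "finite A"
  shows "mu A k B = card {\<sigma> \<in> invs A B. card (nf \<sigma> A) = 2*k}"
proof -
  have "{\<sigma>. \<sigma> permutes A \<and> \<sigma> \<circ> \<sigma> = id \<and> card (transps \<sigma> A) = k
                      \<and> (\<forall>c\<in>A. \<sigma> c \<noteq> c \<longrightarrow> c + \<sigma> c \<in> B)} = {\<sigma> \<in> invs A B. card (nf \<sigma> A) = 2*k}"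
  proof (intro set_eqI iffI)
    fix \<sigma> assume "\<sigma> \<in> {\<sigma>. \<sigma> permutes A \<and> \<sigma> \<circ> \<sigma> = id \<and> card (transps \<sigma> A) = k
                      \<and> (\<forall>c\<in>A. \<sigma> c \<noteq> c \<longrightarrow> c + \<sigma> c \<in> B)}"
    then show "\<sigma> \<in> {\<sigma> \<in> invs A B. card (nf \<sigma> A) = 2*k}"
      using card_transps[OF assms, of \<sigma>] by (auto simp: invs_def permutes_def)
  next
    fix \<sigma> assume "\<sigma> \<in> {\<sigma> \<in> invs A B. card (nf \<sigma> A) = 2*k}"
    then show "\<sigma> \<in> {\<sigma>. \<sigma> permutes A \<and> \<sigma> \<circ> \<sigma> = id \<and> card (transps \<sigma> A) = k
                      \<and> (\<forall>c\<in>A. \<sigma> c \<noteq> c \<longrightarrow> c + \<sigma> c \<in> B)}"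
      using card_transps[OF assms, of \<sigma>] invol_permutes[of \<sigma> A] by (auto simp: invs_def)
  qed
  then show ?thesis unfolding mu_def by simp
qed

lemma finite_invs: "finite A \<Longrightarrow> finite (invs A B)"
  by (rule finite_subset[OF _ finite_permutations[of A]]) (auto simp: invs_def intro: invol_permutes)

lemma restr_univ: "restr_smallest UNIV m = {..<m}"
proof -
  have "card {y::nat. y < x} = x" for x
    using card_lessThan[of x] by (simp add: lessThan_def)
  then show ?thesis unfolding restr_smallest_def by auto
qed


lemma Jstar_mod4: "m \<in> Jstar \<Longrightarrow> m mod 4 = 3"
proof -
  assume "m \<in> Jstar"
  then obtain a k where m: "m = (2*a+1) * 2^(2*k) - 1" and k: "k > 0"
    unfolding Jstar_def by blast
  obtain j where kj: "k = Suc j" using k by (cases k) auto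
  have t: "(2::nat)^(2*k) = 4 * 4^j" using kj by (simp add: power_mult)
  have "(2*a+1) * (4::nat)^j > 0" by simp
  then obtain s where s: "(2*a+1) * 4^j = Suc s" using gr0_implies_Suc by blast
  have "m = 4 * s + 3" using m t s by (simp add: algebra_simps)
  then show ?thesis by simp
qed

definition q :: "nat \<Rightarrow> nat" where "q j = 2*j + j mod 2"

lemma q_mono: "i < j \<Longrightarrow> q i < q j"
proof -
  assume "i < j"
  moreover have "i mod 2 \<le> 1" by simp
  ultimately show ?thesis unfolding q_def by linarith
qed

lemma q_inj: "inj q"
  by (metis injI nat_neq_iff q_mono)


lemma Pset_q: "Pset = range q"
proof (intro set_eqI iffI)
  fix x assume "x \<in> Pset"
  then have "x mod 4 = 0 \<or> x mod 4 = 3" by (simp add: Pset_def)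
  moreover have x4: "x = 4*(x div 4) + x mod 4" by simp
  moreover have "q (2*(x div 4)) = 4*(x div 4)" "q (2*(x div 4)+1) = 4*(x div 4) + 3"
    unfolding q_def by simp_all
  ultimately have "x = q (2*(x div 4)) \<or> x = q (2*(x div 4)+1)"
    by (metis add.right_neutral)
  then show "x \<in> range q" by blast
next
  fix x assume "x \<in> range q"
  then obtain j where "x = q j" by blast
  moreover have "q j mod 4 = 0 \<or> q j mod 4 = 3"
  proof -
    have q4: "q j = 4*(j div 2) + 3*(j mod (2::nat))"
      unfolding q_def using div_mult_mod_eq[of j 2] by linarith
    show ?thesis unfolding q4 by (cases "j mod 2 = 0") (auto simp: mod_2_eq_odd)
  qed
  ultimately have "x mod 4 = 0 \<or> x mod 4 = 3" by simp
  then show "x \<in> Pset" by (simp add: Pset_def)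
qed

lemma restr_P: "restr_smallest Pset n = q ` {..<n}"
proof -
  have c: "card {y\<in>range q. y < q j} = j" for j
  proof -
    have "{y\<in>range q. y < q j} = q ` {..<j}"
    proof (intro set_eqI iffI)
      fix y assume "y \<in> {y\<in>range q. y < q j}"
      then obtain i where "y = q i" "q i < q j" by blast
      then have "i < j" using q_mono by (metis not_less_iff_gr_or_eq order.asym)
      then show "y \<in> q ` {..<j}" using \<open>y = q i\<close> by blast
    qed (use q_mono in auto)
    moreover have "card (q ` {..<j}) = j"
      using card_image[OF inj_on_subset[OF q_inj subset_UNIV, of "{..<j}"]] by simp
    ultimately show ?thesis by simp
  qed
  show ?thesis
  proof (intro set_eqI iffI)
    fix x assume "x \<in> restr_smallest Pset n"
    then obtain j where j: "x = q j" "card {y\<in>range q. y < q j} < n"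
      unfolding restr_smallest_def Pset_q by blast
    then show "x \<in> q ` {..<n}" using c by auto
  next
    fix x assume "x \<in> q ` {..<n}"
    then obtain j where j: "x = q j" "j < n" by blast
    then show "x \<in> restr_smallest Pset n"
      unfolding restr_smallest_def Pset_q using c[of j] by auto
  qed
qed

definition J2 :: "nat set" where "J2 = {m. 2*m+1 \<in> Jstar}"

lemma J2_q: "c + d \<in> J2 \<longleftrightarrow> q c + q d \<in> Jstar"
proof (cases "odd (c+d)")
  case True
  then have "c mod 2 + d mod 2 = 1" by (metis odd_add mod_2_eq_odd odd_iff_mod_2_eq_one add.commute add_0 mod2_eq_if)
  then have "q c + q d = 2*(c+d)+1" unfolding q_def by simp
  then show ?thesis unfolding J2_def by simp
next
  case False
  then obtain h where h: "c + d = 2*h" by blast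
  have cd: "c mod 2 = d mod 2" using False by (auto simp: mod2_eq_if split: if_splits)
  have A: "(2*(c+d)+1) mod 4 = 1" using h by simp
  have E: "q c + q d = 4*h + 2*(c mod 2)" unfolding q_def using h cd by simp
  have "c mod 2 = 0 \<or> c mod 2 = 1" by auto
  moreover have "(4*h + 2) mod 4 \<noteq> (3::nat)" "(4*h) mod 4 \<noteq> (3::nat)" by presburger+
  ultimately have "(q c + q d) mod 4 \<noteq> 3" using E by auto
  then show ?thesis unfolding J2_def using A Jstar_mod4 by fastforce
qed


lemma transport:
  assumes fin: "finite A" and inj: "inj_on f A"
    and cond: "\<And>c d. c\<in>A \<Longrightarrow> d\<in>A \<Longrightarrow> (c+d \<in> J \<longleftrightarrow> f c + f d \<in> J')"
  shows "mu A k J = mu (f`A) k J'"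
proof -
  define g where "g = inv_into A f"
  have gf: "x\<in>A \<Longrightarrow> g (f x) = x" for x unfolding g_def using inj by (simp add: inv_into_f_f)
  have fg: "y\<in>f`A \<Longrightarrow> f (g y) = y" for y unfolding g_def by (simp add: f_inv_into_f)
  have gA: "y\<in>f`A \<Longrightarrow> g y \<in> A" for y unfolding g_def by (simp add: inv_into_into)
  define T where "T \<sigma> y = (if y \<in> f`A then f (\<sigma> (g y)) else y)" for \<sigma> :: "nat \<Rightarrow> nat" and y
  define T' where "T' \<rho> x = (if x \<in> A then g (\<rho> (f x)) else x)" for \<rho> :: "nat \<Rightarrow> nat" and x
  let ?S1 = "{\<sigma> \<in> invs A J. card (nf \<sigma> A) = 2*k}"
  let ?S2 = "{\<rho> \<in> invs (f`A) J'. card (nf \<rho> (f`A)) = 2*k}"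
  have fwd: "T \<sigma> \<in> ?S2" if s: "\<sigma> \<in> ?S1" for \<sigma>
  proof -
    have ii: "\<sigma> \<circ> \<sigma> = id" and out: "\<forall>x. x\<notin>A \<longrightarrow> \<sigma> x = x"
      and cd: "\<forall>c\<in>A. \<sigma> c \<noteq> c \<longrightarrow> c + \<sigma> c \<in> J" and cn: "card (nf \<sigma> A) = 2*k"
      using s by (auto simp: invs_def)
    have inv: "\<sigma> (\<sigma> x) = x" for x using ii by (metis comp_apply id_apply)
    have mA: "x\<in>A \<Longrightarrow> \<sigma> x \<in> A" for x using inv_maps[OF ii out] by blast
    have 1: "T \<sigma> \<circ> T \<sigma> = id"
    proof
      fix y show "(T \<sigma> \<circ> T \<sigma>) y = id y"
        by (cases "y \<in> f`A") (auto simp: T_def gf fg gA mA inv)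
    qed
    have 2: "\<forall>y. y \<notin> f`A \<longrightarrow> T \<sigma> y = y" by (simp add: T_def)
    have 3: "\<forall>c\<in>f`A. T \<sigma> c \<noteq> c \<longrightarrow> c + T \<sigma> c \<in> J'"
    proof (intro ballI impI)
      fix c assume c: "c \<in> f`A" and ne: "T \<sigma> c \<noteq> c"
      then obtain x where x: "x \<in> A" "c = f x" by blast
      have Tc: "T \<sigma> c = f (\<sigma> x)" using x by (simp add: T_def gf)
      then have "\<sigma> x \<noteq> x" using ne x by auto
      then have "x + \<sigma> x \<in> J" using cd x by blast
      then show "c + T \<sigma> c \<in> J'" using cond[OF x(1) mA[OF x(1)]] x Tc by simp
    qed
    have "nf (T \<sigma>) (f`A) = f ` nf \<sigma> A"
    proof (intro set_eqI iffI)
      fix y assume "y \<in> nf (T \<sigma>) (f`A)"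
      then obtain x where x: "x \<in> A" "y = f x" "T \<sigma> y \<noteq> y" by (auto simp: nf_def)
      then have "\<sigma> x \<noteq> x" by (auto simp: T_def gf)
      then show "y \<in> f ` nf \<sigma> A" using x by (auto simp: nf_def)
    next
      fix y assume "y \<in> f ` nf \<sigma> A"
      then obtain x where x: "x \<in> A" "y = f x" "\<sigma> x \<noteq> x" by (auto simp: nf_def)
      then have "f (\<sigma> x) \<noteq> f x" using inj mA by (metis inj_on_eq_iff)
      then show "y \<in> nf (T \<sigma>) (f`A)" using x by (auto simp: nf_def T_def gf)
    qed
    then have "card (nf (T \<sigma>) (f`A)) = card (nf \<sigma> A)"
      using inj by (simp add: card_image inj_on_subset nf_def)
    then show ?thesis using 1 2 3 cn by (simp add: invs_def)
  qed
  have bwd: "T' \<rho> \<in> ?S1" if s: "\<rho> \<in> ?S2" for \<rho>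
  proof -
    have ii: "\<rho> \<circ> \<rho> = id" and out: "\<forall>x. x\<notin>f`A \<longrightarrow> \<rho> x = x"
      and cd: "\<forall>c\<in>f`A. \<rho> c \<noteq> c \<longrightarrow> c + \<rho> c \<in> J'" and cn: "card (nf \<rho> (f`A)) = 2*k"
      using s by (auto simp: invs_def)
    have inv: "\<rho> (\<rho> x) = x" for x using ii by (metis comp_apply id_apply)
    have mA: "x\<in>f`A \<Longrightarrow> \<rho> x \<in> f`A" for x using inv_maps[OF ii out] by blast
    have 1: "T' \<rho> \<circ> T' \<rho> = id"
    proof
      fix x show "(T' \<rho> \<circ> T' \<rho>) x = id x"
        by (cases "x \<in> A") (auto simp: T'_def gf fg gA mA inv)
    qed
    have 2: "\<forall>x. x \<notin> A \<longrightarrow> T' \<rho> x = x" by (simp add: T'_def)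
    have 3: "\<forall>c\<in>A. T' \<rho> c \<noteq> c \<longrightarrow> c + T' \<rho> c \<in> J"
    proof (intro ballI impI)
      fix c assume c: "c \<in> A" and ne: "T' \<rho> c \<noteq> c"
      have fc: "f c \<in> f`A" using c by blast
      have Tc: "T' \<rho> c = g (\<rho> (f c))" using c by (simp add: T'_def)
      have fT: "f (T' \<rho> c) = \<rho> (f c)" using Tc fg mA[OF fc] by simp
      have "\<rho> (f c) \<noteq> f c" using ne Tc gf c by auto
      then have "f c + \<rho> (f c) \<in> J'" using cd fc by blast
      then show "c + T' \<rho> c \<in> J" using cond[OF c gA[OF mA[OF fc]]] Tc fT by simp
    qed
    have "nf (T' \<rho>) A = g ` nf \<rho> (f`A)"
    proof (intro set_eqI iffI)
      fix x assume "x \<in> nf (T' \<rho>) A"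
      then have x: "x \<in> A" "T' \<rho> x \<noteq> x" by (auto simp: nf_def)
      then have "\<rho> (f x) \<noteq> f x" by (auto simp: T'_def gf)
      then show "x \<in> g ` nf \<rho> (f`A)" using x gf by (force simp: nf_def)
    next
      fix x assume "x \<in> g ` nf \<rho> (f`A)"
      then obtain y where y: "y \<in> f`A" "x = g y" "\<rho> y \<noteq> y" by (auto simp: nf_def)
      have "g (\<rho> y) \<noteq> g y" using y fg mA by metis
      then show "x \<in> nf (T' \<rho>) A" using y gA fg by (auto simp: nf_def T'_def)
    qed
    moreover have "inj_on g (f`A)" unfolding g_def by (rule inj_on_inv_into) simp
    ultimately have "card (nf (T' \<rho>) A) = card (nf \<rho> (f`A))"
      by (simp add: card_image inj_on_subset nf_def)
    then show ?thesis using 1 2 3 cn by (simp add: invs_def)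
  qed
  have "bij_betw T ?S1 ?S2"
  proof (rule bij_betw_byWitness[where f'=T'])
    show "\<forall>a\<in>?S1. T' (T a) = a"
    proof
      fix \<sigma> assume s: "\<sigma> \<in> ?S1"
      then have ii: "\<sigma> \<circ> \<sigma> = id" and out: "\<forall>x. x\<notin>A \<longrightarrow> \<sigma> x = x" by (auto simp: invs_def)
      have mA: "x\<in>A \<Longrightarrow> \<sigma> x \<in> A" for x using inv_maps[OF ii out] by blast
      show "T' (T \<sigma>) = \<sigma>"
      proof
        fix x show "T' (T \<sigma>) x = \<sigma> x" using out by (cases "x \<in> A") (auto simp: T_def T'_def gf mA)
      qed
    qed
    show "\<forall>a\<in>?S2. T (T' a) = a"
    proof
      fix \<rho> assume s: "\<rho> \<in> ?S2"
      then have ii: "\<rho> \<circ> \<rho> = id" and out: "\<forall>x. x\<notin>f`A \<longrightarrow> \<rho> x = x" by (auto simp: invs_def)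
      have mA: "x\<in>f`A \<Longrightarrow> \<rho> x \<in> f`A" for x using inv_maps[OF ii out] by blast
      show "T (T' \<rho>) = \<rho>"
      proof
        fix y show "T (T' \<rho>) y = \<rho> y" using out by (cases "y \<in> f`A") (auto simp: T_def T'_def gf fg gA mA)
      qed
    qed
  qed (use fwd bwd in blast)+
  then have "card ?S1 = card ?S2" by (rule bij_betw_same_card)
  then show ?thesis using mu_alt fin by simp
qed


lemma dm2: "b < 2 \<Longrightarrow> (2*a+b) div 2 = (a::nat) \<and> (2*a+b) mod 2 = b"
  by auto

definition tau :: "nat \<Rightarrow> nat" where "tau x = 2*(x div 2) + (1 - x mod 2)"

lemma tau_tau[simp]: "tau (tau x) = x"
  unfolding tau_def using dm2[of "1 - x mod 2" "x div 2"] by simp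

lemma tau_div[simp]: "tau x div 2 = x div 2" and tau_mod: "tau x mod 2 = 1 - x mod 2"
  unfolding tau_def using dm2[of "1 - x mod 2" "x div 2"] by simp_all

lemma tau_sum: "odd (a+b) \<Longrightarrow> tau a + tau b = a + b"
proof -
  assume "odd (a+b)"
  then have "a mod 2 + b mod 2 = 1" by (auto simp: mod2_eq_if split: if_splits)
  then show ?thesis unfolding tau_def using div_mult_mod_eq[of a 2] div_mult_mod_eq[of b 2] by linarith
qed

lemma lt2: "y < 2*n \<longleftrightarrow> y div 2 < (n::nat)" by auto

lemma tau_lt: "tau x < 2*n \<longleftrightarrow> x < 2*n"
  using lt2[of x n] lt2[of "tau x" n] by simp

lemma mod4_facts: "(2*j + m) mod 4 = (3::nat) \<Longrightarrow> m = 2*(m div 2) + 1 \<and> m div 2 \<noteq> j"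
  by presburger

definition lift :: "(nat \<Rightarrow> nat) \<Rightarrow> nat \<Rightarrow> nat" where
  "lift \<rho> x = (if \<rho> (x div 2) = x div 2 then x else 2 * \<rho> (x div 2) + (1 - x mod 2))"

definition proj :: "(nat \<Rightarrow> nat) \<Rightarrow> nat \<Rightarrow> nat" where
  "proj \<sigma> j = \<sigma> (2*j) div 2"

lemma proj_lift: "proj (lift \<rho>) = \<rho>"
proof
  fix j show "proj (lift \<rho>) j = \<rho> j"
    unfolding proj_def lift_def using dm2[of 1 "\<rho> j"] by auto
qed

lemma lift_nf: "lift \<rho> x \<noteq> x \<longleftrightarrow> \<rho> (x div 2) \<noteq> x div 2"
proof
  assume "\<rho> (x div 2) \<noteq> x div 2"
  moreover have "lift \<rho> x div 2 = \<rho> (x div 2)" if "\<rho> (x div 2) \<noteq> x div 2"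
    using that dm2[of "1 - x mod 2" "\<rho> (x div 2)"] unfolding lift_def by simp
  ultimately show "lift \<rho> x \<noteq> x" by metis
qed (auto simp: lift_def)

lemma lift_ne: "\<rho> (z div 2) \<noteq> z div 2 \<Longrightarrow> lift \<rho> z = 2 * \<rho> (z div 2) + (1 - z mod 2)"
  by (simp add: lift_def)

lemma lift_in:
  assumes "\<rho> \<in> invs {..<n} J2"
  shows "lift \<rho> \<in> invs {..<2*n} Jstar" "tau \<circ> lift \<rho> \<circ> tau = lift \<rho>"
    "card (nf (lift \<rho>) {..<2*n}) = 2 * card (nf \<rho> {..<n})"
proof -
  have ii: "\<rho> \<circ> \<rho> = id" and out: "\<forall>x. x\<notin>{..<n} \<longrightarrow> \<rho> x = x"
      and cd: "\<forall>c\<in>{..<n}. \<rho> c \<noteq> c \<longrightarrow> c + \<rho> c \<in> J2"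
      using assms by (auto simp: invs_def)
  have inv: "\<rho> (\<rho> x) = x" for x using ii by (metis comp_apply id_apply)
  have L: "lift \<rho> (lift \<rho> x) = x" for x
  proof (cases "\<rho> (x div 2) = x div 2")
    case True then show ?thesis by (simp add: lift_def)
  next
    case False
    let ?y = "2 * \<rho> (x div 2) + (1 - x mod 2)"
    have y: "?y div 2 = \<rho> (x div 2)" "?y mod 2 = 1 - x mod 2"
      using dm2[of "1 - x mod 2" "\<rho> (x div 2)"] by simp_all
    have ly: "lift \<rho> x = ?y" using False by (simp add: lift_def)
    have ne: "\<rho> (?y div 2) \<noteq> ?y div 2" using y False inv by metis
    have "lift \<rho> (lift \<rho> x) = lift \<rho> ?y" by (simp only: ly)
    also have "\<dots> = 2 * \<rho> (?y div 2) + (1 - ?y mod 2)" by (rule lift_ne) (rule ne)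
    also have "\<dots> = 2 * (x div 2) + (1 - (1 - x mod 2))" by (simp only: y inv)
    also have "\<dots> = x" using div_mult_mod_eq[of x 2] by simp
    finally show ?thesis .
  qed
  have 1: "lift \<rho> \<circ> lift \<rho> = id" using L by auto
  have 2: "\<forall>x. x \<notin> {..<2*n} \<longrightarrow> lift \<rho> x = x"
    using out by (auto simp: lift_def)
  have 3: "\<forall>c\<in>{..<2*n}. lift \<rho> c \<noteq> c \<longrightarrow> c + lift \<rho> c \<in> Jstar"
  proof (intro ballI impI)
    fix c assume c: "c \<in> {..<2*n}" and ne: "lift \<rho> c \<noteq> c"
    have ne2: "\<rho> (c div 2) \<noteq> c div 2" using ne lift_nf by blast
    have "c div 2 < n" using c by auto
    then have "c div 2 + \<rho> (c div 2) \<in> J2" using cd ne2 by blast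
    moreover have "c + lift \<rho> c = 2 * (c div 2 + \<rho> (c div 2)) + 1"
    proof -
      have "c mod 2 \<le> 1" by simp
      then show ?thesis using lift_ne[of \<rho> c, OF ne2] div_mult_mod_eq[of c 2] by arith
    qed
    ultimately show "c + lift \<rho> c \<in> Jstar" by (simp add: J2_def)
  qed
  show "lift \<rho> \<in> invs {..<2*n} Jstar" using 1 2 3 by (simp add: invs_def)
  show "tau \<circ> lift \<rho> \<circ> tau = lift \<rho>"
  proof
    fix x
    show "(tau \<circ> lift \<rho> \<circ> tau) x = lift \<rho> x"
    proof (cases "\<rho> (x div 2) = x div 2")
      case True then show ?thesis by (simp add: lift_def)
    next
      case False
      have "lift \<rho> (tau x) = 2 * \<rho> (x div 2) + x mod 2"
        using False by (simp add: lift_def tau_mod)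
      then have "tau (lift \<rho> (tau x)) = 2 * \<rho> (x div 2) + (1 - x mod 2)"
        unfolding tau_def using dm2[of "x mod 2" "\<rho> (x div 2)"] by simp
      moreover have "lift \<rho> x = 2 * \<rho> (x div 2) + (1 - x mod 2)"
        using False by (simp add: lift_def)
      ultimately show ?thesis by simp
    qed
  qed
  let ?N = "nf \<rho> {..<n}"
  have "nf (lift \<rho>) {..<2*n} = (\<lambda>j. 2*j) ` ?N \<union> (\<lambda>j. 2*j+1) ` ?N"
  proof (intro set_eqI iffI)
    fix x assume "x \<in> nf (lift \<rho>) {..<2*n}"
    then have x: "x < 2*n" "\<rho> (x div 2) \<noteq> x div 2" using lift_nf by (auto simp: nf_def)
    have "x div 2 \<in> ?N" using x by (auto simp: nf_def)
    moreover have "x = 2 * (x div 2) \<or> x = 2 * (x div 2) + 1" by auto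
    ultimately show "x \<in> (\<lambda>j. 2*j) ` ?N \<union> (\<lambda>j. 2*j+1) ` ?N" by blast
  next
    fix x assume "x \<in> (\<lambda>j. 2*j) ` ?N \<union> (\<lambda>j. 2*j+1) ` ?N"
    then obtain j where j: "j \<in> ?N" "x = 2*j \<or> x = 2*j+1" by blast
    then have "x div 2 = j" by auto
    then show "x \<in> nf (lift \<rho>) {..<2*n}" using j lift_nf by (auto simp: nf_def)
  qed
  moreover have "finite ?N" by (simp add: nf_def)
  moreover have "(\<lambda>j. 2*j) ` ?N \<inter> (\<lambda>j. 2*j+1) ` ?N = {}" by auto presburger
  moreover have "card ((\<lambda>j. 2*j) ` ?N) = card ?N" "card ((\<lambda>j. 2*j+1) ` ?N) = card ?N"
    by (simp_all add: card_image inj_on_def)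
  ultimately show "card (nf (lift \<rho>) {..<2*n}) = 2 * card (nf \<rho> {..<n})"
    by (simp add: card_Un_disjoint)
qed

lemma lift_surj:
  assumes s: "\<sigma> \<in> invs {..<2*n} Jstar" and fx: "tau \<circ> \<sigma> \<circ> tau = \<sigma>"
  shows "proj \<sigma> \<in> invs {..<n} J2" "lift (proj \<sigma>) = \<sigma>"
proof -
  have ii: "\<sigma> \<circ> \<sigma> = id" and out: "\<forall>x. x\<notin>{..<2*n} \<longrightarrow> \<sigma> x = x"
      and cd: "\<forall>c\<in>{..<2*n}. \<sigma> c \<noteq> c \<longrightarrow> c + \<sigma> c \<in> Jstar"
      using s by (auto simp: invs_def)
  have inv: "\<sigma> (\<sigma> x) = x" for x using ii by (metis comp_apply id_apply)
  have comm: "\<sigma> (tau x) = tau (\<sigma> x)" for x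
  proof -
    have "tau (\<sigma> (tau (tau x))) = \<sigma> (tau x)" using fun_cong[OF fx, of "tau x"] by simp
    then show ?thesis by simp
  qed
  have P: "\<sigma> x \<noteq> x \<Longrightarrow> x < 2*n \<and> x + \<sigma> x \<in> Jstar" for x using out cd by auto
  have Q: "\<sigma> (2*j) = 2*j \<or> (\<sigma> (2*j) = 2*(\<sigma> (2*j) div 2) + 1 \<and> \<sigma> (2*j) div 2 \<noteq> j)" for j
  proof (cases "\<sigma> (2*j) = 2*j")
    case False
    then have "2*j + \<sigma> (2*j) \<in> Jstar" using P by blast
    then have "(2*j + \<sigma> (2*j)) mod 4 = 3" by (rule Jstar_mod4)
    then show ?thesis using mod4_facts by blast
  qed simp
  have t2: "tau (2*j) = 2*j+1" "tau (2*m+1) = 2*m" for j m unfolding tau_def by simp_all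
  have pj: "proj \<sigma> j = \<sigma> (2*j) div 2" for j by (simp add: proj_def)
  have E: "lift (proj \<sigma>) (2*j) = \<sigma> (2*j) \<and> lift (proj \<sigma>) (2*j+1) = \<sigma> (2*j+1)" for j
  proof (cases "\<sigma> (2*j) = 2*j")
    case True
    then have pj1: "proj \<sigma> j = j" by (simp add: pj)
    have "\<sigma> (2*j+1) = \<sigma> (tau (2*j))" using t2 by simp
    also have "\<dots> = tau (\<sigma> (2*j))" by (rule comm)
    also have "\<dots> = 2*j+1" using True t2 by simp
    finally show ?thesis using True pj1 by (simp add: lift_def)
  next
    case False
    define m where "m = \<sigma> (2*j) div 2"
    have sm: "\<sigma> (2*j) = 2*m+1" "m \<noteq> j" using Q[of j] False m_def by auto
    have pm: "proj \<sigma> j = m" by (simp add: pj m_def)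
    have "\<sigma> (2*j+1) = \<sigma> (tau (2*j))" using t2 by simp
    also have "\<dots> = tau (\<sigma> (2*j))" by (rule comm)
    also have "\<dots> = 2*m" using sm t2 by simp
    finally show ?thesis using sm pm by (simp add: lift_def)
  qed
  show L: "lift (proj \<sigma>) = \<sigma>"
  proof
    fix x :: nat
    have "x = 2*(x div 2) \<or> x = 2*(x div 2)+1" by auto
    then show "lift (proj \<sigma>) x = \<sigma> x"
    proof
      assume h: "x = 2*(x div 2)"
      show ?thesis using E[of "x div 2"] by (simp only: h[symmetric])
    next
      assume h: "x = 2*(x div 2)+1"
      show ?thesis using E[of "x div 2"] by (simp only: h[symmetric])
    qed
  qed
  have 1: "proj \<sigma> \<circ> proj \<sigma> = id"
  proof
    fix j show "(proj \<sigma> \<circ> proj \<sigma>) j = id j"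
    proof (cases "\<sigma> (2*j) = 2*j")
      case True then show ?thesis by (simp add: pj)
    next
      case False
      define m where "m = \<sigma> (2*j) div 2"
      have sm: "\<sigma> (2*j) = 2*m+1" using Q[of j] False m_def by auto
      have "\<sigma> (2*m) = \<sigma> (tau (2*m+1))" using t2 by simp
      also have "\<dots> = tau (\<sigma> (\<sigma> (2*j)))" using sm by (simp add: comm)
      also have "\<dots> = 2*j+1" using inv t2 by simp
      finally have "\<sigma> (2*m) div 2 = j" by simp
      then show ?thesis by (simp add: pj m_def)
    qed
  qed
  have 2: "\<forall>j. j \<notin> {..<n} \<longrightarrow> proj \<sigma> j = j"
  proof (intro allI impI)
    fix j assume "j \<notin> {..<n}"
    then have "\<not> 2*j < 2*n" by simp
    then have "\<sigma> (2*j) = 2*j" using P by blast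
    then show "proj \<sigma> j = j" by (simp add: pj)
  qed
  have 3: "\<forall>c\<in>{..<n}. proj \<sigma> c \<noteq> c \<longrightarrow> c + proj \<sigma> c \<in> J2"
  proof (intro ballI impI)
    fix j assume "j \<in> {..<n}" and ne: "proj \<sigma> j \<noteq> j"
    then have F: "\<sigma> (2*j) \<noteq> 2*j" by (auto simp: pj)
    define m where "m = \<sigma> (2*j) div 2"
    have sm: "\<sigma> (2*j) = 2*m+1" using Q[of j] F m_def by auto
    have "2*j + \<sigma> (2*j) \<in> Jstar" using P F by blast
    then have "2*(j+m)+1 \<in> Jstar" using sm by (simp add: algebra_simps)
    then show "j + proj \<sigma> j \<in> J2" by (simp add: J2_def pj m_def)
  qed
  show "proj \<sigma> \<in> invs {..<n} J2" using 1 2 3 by (simp add: invs_def)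
qed



lemma Jstar_odd: "m \<in> Jstar \<Longrightarrow> odd m"
proof -
  assume "m \<in> Jstar"
  then have "m mod 4 = 3" by (rule Jstar_mod4)
  moreover have "m mod 4 mod 2 = m mod 2" by (rule mod_mod_cancel) simp
  ultimately have "m mod 2 = 1" by simp
  then show "odd m" by (simp add: odd_iff_mod_2_eq_one)
qed
lemma Phi_in:
  assumes s: "\<sigma> \<in> invs {..<2*n} Jstar"
  shows "tau \<circ> \<sigma> \<circ> tau \<in> invs {..<2*n} Jstar"
    "card (nf (tau \<circ> \<sigma> \<circ> tau) {..<2*n}) = card (nf \<sigma> {..<2*n})"
proof -
  have ii: "\<sigma> \<circ> \<sigma> = id" and out: "\<forall>x. x\<notin>{..<2*n} \<longrightarrow> \<sigma> x = x"
      and cd: "\<forall>c\<in>{..<2*n}. \<sigma> c \<noteq> c \<longrightarrow> c + \<sigma> c \<in> Jstar"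
      using s by (auto simp: invs_def)
  have inv: "\<sigma> (\<sigma> x) = x" for x using ii by (metis comp_apply id_apply)
  have 1: "(tau \<circ> \<sigma> \<circ> tau) \<circ> (tau \<circ> \<sigma> \<circ> tau) = id" by (auto simp: inv)
  have 2: "\<forall>x. x\<notin>{..<2*n} \<longrightarrow> (tau \<circ> \<sigma> \<circ> tau) x = x"
    using out tau_lt by auto
  have 3: "\<forall>c\<in>{..<2*n}. (tau \<circ> \<sigma> \<circ> tau) c \<noteq> c \<longrightarrow> c + (tau \<circ> \<sigma> \<circ> tau) c \<in> Jstar"
  proof (intro ballI impI)
    fix c assume c: "c \<in> {..<2*n}" and ne: "(tau \<circ> \<sigma> \<circ> tau) c \<noteq> c"
    let ?d = "tau c"
    have d: "?d \<in> {..<2*n}" using c tau_lt by auto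
    have "\<sigma> ?d \<noteq> ?d" using ne by auto
    then have J: "?d + \<sigma> ?d \<in> Jstar" using cd d by blast
    then have "odd (?d + \<sigma> ?d)" by (rule Jstar_odd)
    then have "tau ?d + tau (\<sigma> ?d) = ?d + \<sigma> ?d" by (rule tau_sum)
    then show "c + (tau \<circ> \<sigma> \<circ> tau) c \<in> Jstar" using J by simp
  qed
  show "tau \<circ> \<sigma> \<circ> tau \<in> invs {..<2*n} Jstar" using 1 2 3 by (simp add: invs_def)
  have "nf (tau \<circ> \<sigma> \<circ> tau) {..<2*n} = tau ` nf \<sigma> {..<2*n}"
  proof (intro set_eqI iffI)
    fix x assume "x \<in> nf (tau \<circ> \<sigma> \<circ> tau) {..<2*n}"
    then have x: "x < 2*n" "tau (\<sigma> (tau x)) \<noteq> x" by (auto simp: nf_def)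
    then have "tau x \<in> nf \<sigma> {..<2*n}" using tau_lt by (auto simp: nf_def)
    then show "x \<in> tau ` nf \<sigma> {..<2*n}" by (metis image_eqI tau_tau)
  next
    fix x assume "x \<in> tau ` nf \<sigma> {..<2*n}"
    then obtain y where y: "y < 2*n" "\<sigma> y \<noteq> y" "x = tau y" by (auto simp: nf_def)
    then show "x \<in> nf (tau \<circ> \<sigma> \<circ> tau) {..<2*n}" using tau_lt by (auto simp: nf_def) (metis tau_tau)
  qed
  moreover have "inj tau" by (metis injI tau_tau)
  ultimately show "card (nf (tau \<circ> \<sigma> \<circ> tau) {..<2*n}) = card (nf \<sigma> {..<2*n})"
    by (simp add: card_image inj_on_subset)
qed

theorem lemma2p3:
  fixes n k :: nat
  shows "(odd k \<longrightarrow> mu (restr_smallest UNIV (2*n)) k Jstar mod 2 = 0) \<and>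
         (even k \<longrightarrow> mu (restr_smallest UNIV (2*n)) k Jstar mod 2
                      = mu (restr_smallest Pset n) (k div 2) Jstar mod 2)"
proof -
  let ?A = "{..<2*n}"
  let ?S = "{\<sigma> \<in> invs ?A Jstar. card (nf \<sigma> ?A) = 2*k}"
  let ?F = "{\<sigma> \<in> ?S. tau \<circ> \<sigma> \<circ> tau = \<sigma>}"
  let ?R = "{\<rho> \<in> invs {..<n} J2. card (nf \<rho> {..<n}) = k}"
  have m1: "mu (restr_smallest UNIV (2*n)) k Jstar = card ?S"
    unfolding restr_univ by (rule mu_alt) simp
  have par: "card ?S mod 2 = card ?F mod 2"
  proof (rule parity)
    show "finite ?S" using finite_invs[of ?A Jstar] by simp
    fix \<sigma> assume "\<sigma> \<in> ?S"
    then show "tau \<circ> \<sigma> \<circ> tau \<in> ?S \<and> tau \<circ> (tau \<circ> \<sigma> \<circ> tau) \<circ> tau = \<sigma>"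
      using Phi_in[of \<sigma> n] by (auto simp: fun_eq_iff)
  qed
  have FR: "?F = lift ` ?R"
  proof (intro set_eqI iffI)
    fix \<sigma> assume s: "\<sigma> \<in> ?F"
    then have a: "\<sigma> \<in> invs ?A Jstar" "tau \<circ> \<sigma> \<circ> tau = \<sigma>" "card (nf \<sigma> ?A) = 2*k" by auto
    have p: "proj \<sigma> \<in> invs {..<n} J2" "lift (proj \<sigma>) = \<sigma>" using lift_surj[OF a(1,2)] by auto
    have "card (nf \<sigma> ?A) = 2 * card (nf (proj \<sigma>) {..<n})" using lift_in(3)[OF p(1)] p(2) by simp
    then have "proj \<sigma> \<in> ?R" using a(3) p(1) by simp
    then show "\<sigma> \<in> lift ` ?R" using p(2) by (metis image_eqI)
  next
    fix \<sigma> assume "\<sigma> \<in> lift ` ?R"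
    then obtain \<rho> where r: "\<rho> \<in> invs {..<n} J2" "card (nf \<rho> {..<n}) = k" "\<sigma> = lift \<rho>" by auto
    then show "\<sigma> \<in> ?F" using lift_in[OF r(1)] by simp
  qed
  have "inj lift" by (metis injI proj_lift)
  then have cFR: "card ?F = card ?R" unfolding FR by (simp add: card_image inj_on_subset)
  have evR: "even (card (nf \<rho> {..<n}))" if "\<rho> \<in> invs {..<n} J2" for \<rho>
    using card_transps[of "{..<n}" \<rho>] that by (simp add: invs_def)
  show ?thesis
  proof (intro conjI impI)
    assume "odd k"
    then have "?R = {}" using evR by auto
    then have "card ?R = 0" by (metis card.empty)
    then have "card ?F = 0" using cFR by linarith
    then have "card ?S mod 2 = 0" by (simp only: par mod_0)
    then show "mu (restr_smallest UNIV (2*n)) k Jstar mod 2 = 0" by (simp only: m1)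
  next
    assume "even k"
    then have "2 * (k div 2) = k" by simp
    then have e1: "mu {..<n} (k div 2) J2 = card ?R" using mu_alt[of "{..<n}" "k div 2" J2] by simp
    have e2: "mu {..<n} (k div 2) J2 = mu (q ` {..<n}) (k div 2) Jstar"
      by (rule transport) (simp, rule inj_on_subset[OF q_inj], simp, rule J2_q)
    have "mu (restr_smallest UNIV (2*n)) k Jstar mod 2 = card ?S mod 2" by (simp only: m1)
    also have "\<dots> = card ?F mod 2" by (rule par)
    also have "\<dots> = card ?R mod 2" by (simp only: cFR)
    also have "\<dots> = mu (q ` {..<n}) (k div 2) Jstar mod 2" by (simp only: e1[symmetric] e2)
    also have "\<dots> = mu (restr_smallest Pset n) (k div 2) Jstar mod 2" by (simp only: restr_P)
    finally show "mu (restr_smallest UNIV (2*n)) k Jstar mod 2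
                      = mu (restr_smallest Pset n) (k div 2) Jstar mod 2" .
  qed
qed

end
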